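(* Let $W:\mathcal{X}\to\mathcal{Y}$ be a channel with $\mathcal{Y}$ finite, let $n\in\mathbb{N}$, $0<\delta\le\sqrt{n}\log|\mathcal{Y}|$, and let $x^n,x'^n\in\mathcal{X}^n$ satisfy $1-\frac12\|W_{x^n}-W_{x'^n}\|_1\le\epsilon$. Then \[ W_{x'^n}(\mathcal{T}^\delta_{x^n})\le 2\exp\!\left(-\delta^2/36K(|\mathcal{Y}|)\right)+\epsilon\left(1+2^{2\delta\sqrt{n}}\,2^{H(W_{x^n})-H(W_{x'^n})}\right). \]
   Context: A channel $W:\mathcal{X}\to\mathcal{Y}$ ($\mathcal{X}$ a measurable space) is a measurable map $x\mapsto W_x\in\mathcal{P}(\mathcal{Y})$; $W_{x^n}(y^n)=\prod_{i=1}^nW_{x_i}(y_i)$. Logarithms and exponentials are base 2. $\|P-Q\|_1=\sum_y|P(y)-Q(y)|$. $H$ denotes Shannon entropy (base 2), so $H(W_{x^n})=\sum_iH(W_{x_i})$. The conditional typical set is $\mathcal{T}^\delta_{x^n}=\{y^n\in\mathcal{Y}^n:|\log W_{x^n}(y^n)+H(W_{x^n})|\le\delta\sqrt{n}\}$, and $K(d)=(\log\max\{d,3\})^2$. *)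

theory Defs
  imports "HOL-Analysis.Analysis"
begin

text \<open>A channel from a measurable space X to a finite alphabet 'y:
  x \<mapsto> W x, each W x a probability distribution on 'y, measurable in x.
  (For finite 'y, measurability into P('y) is measurability of each coordinate.)\<close>
definition channel :: "'x measure \<Rightarrow> ('x \<Rightarrow> 'y::finite \<Rightarrow> real) \<Rightarrow> bool" where
  "channel X W \<longleftrightarrow>
     (\<forall>x \<in> space X. (\<forall>y. W x y \<ge> 0) \<and> (\<Sum>y\<in>UNIV. W x y) = 1) \<and>
     (\<forall>y. (\<lambda>x. W x y) \<in> borel_measurable X)"

definition prod_chan :: "('x \<Rightarrow> 'y \<Rightarrow> real) \<Rightarrow> 'x list \<Rightarrow> 'y list \<Rightarrow> real" where
  "prod_chan W xs ys = (\<Prod>i<length xs. W (xs ! i) (ys ! i))"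

text \<open>Shannon entropy in base 2 (0 log 0 = 0, automatic since log 2 0 = 0 in Isabelle).\<close>
definition entropy2 :: "('y::finite \<Rightarrow> real) \<Rightarrow> real" where
  "entropy2 P = - (\<Sum>y\<in>UNIV. P y * log 2 (P y))"

definition entropy_prod :: "('x \<Rightarrow> 'y::finite \<Rightarrow> real) \<Rightarrow> 'x list \<Rightarrow> real" where
  "entropy_prod W xs = (\<Sum>i<length xs. entropy2 (W (xs ! i)))"

text \<open>Conditional typical set; sequences of probability zero have log W = -infinity
  and hence are never typical.\<close>
definition typical_set :: "('x \<Rightarrow> 'y::finite \<Rightarrow> real) \<Rightarrow> real \<Rightarrow> 'x list \<Rightarrow> 'y list set" where
  "typical_set W \<delta> xs = {ys. length ys = length xs \<and> prod_chan W xs ys > 0 \<and>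
      \<bar>log 2 (prod_chan W xs ys) + entropy_prod W xs\<bar> \<le> \<delta> * sqrt (real (length xs))}"

definition l1_dist_prod :: "('x \<Rightarrow> 'y::finite \<Rightarrow> real) \<Rightarrow> 'x list \<Rightarrow> 'x list \<Rightarrow> real" where
  "l1_dist_prod W xs xs' =
     (\<Sum>ys\<in>{ys. length ys = length xs}. \<bar>prod_chan W xs ys - prod_chan W xs' ys\<bar>)"

definition Kfun :: "real \<Rightarrow> real" where
  "Kfun d = (log 2 (max d 3))\<^sup>2"

end

theory Submission imports Defs begin

lemma exp_upper_neg: "x \<le> 0 \<Longrightarrow> exp x \<le> 1 + x + x\<^sup>2 / 2" for x :: real
proof -
  assume x: "x \<le> 0"
  obtain t where "exp x = (\<Sum>m<3. (x ^ m) / fact m) + (exp t / fact 3) * x ^ 3"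
    using Maclaurin_exp_le [of x 3] by blast
  moreover have "x ^ 3 \<le> 0" using x by (simp add: power_le_zero_eq)
  moreover have "exp t / fact 3 \<ge> 0" by simp
  ultimately have a: "exp t / fact 3 * x ^ 3 \<le> 0" and b: "exp x = (\<Sum>m<3. (x ^ m) / fact m) + (exp t / fact 3) * x ^ 3"
    by (simp_all only: mult_nonneg_nonpos)
  have "(\<Sum>m<3. (x ^ m) / fact m) = 1 + x + x\<^sup>2 / 2"
    by (simp add: numeral_3_eq_3 power2_eq_square)
  with a b show ?thesis by linarith
qed

lemma ln2_le: "ln (2::real) \<le> 9/10"
proof -
  have "exp (9/10::real) = exp (9/20) * exp (9/20)" by (simp flip: exp_add)
  also have "\<dots> \<ge> (29/20) * (29/20)"
    using exp_ge_add_one_self[of "9/20::real"] by (intro mult_mono) auto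
  finally have "2 \<le> exp (9/10::real)" by simp
  thus ?thesis by (metis ln_exp ln_le_cancel_iff exp_gt_zero zero_less_numeral)
qed

lemma sum_lists_prod:
  fixes f :: "'x \<Rightarrow> 'y::finite \<Rightarrow> real"
  shows "(\<Sum>ys\<in>{ys. length ys = length xs}. \<Prod>i<length xs. f (xs!i) (ys!i))
         = (\<Prod>i<length xs. \<Sum>y\<in>UNIV. f (xs!i) y)"
proof (induction xs)
  case Nil
  have "{ys::'y list. length ys = 0} = {[]}" by auto
  then show ?case by simp
next
  case (Cons x xs)
  let ?S = "{ys::'y list. length ys = length xs}"
  have eq: "{ys::'y list. length ys = length (x#xs)} = (\<lambda>(y, ys). y#ys) ` (UNIV \<times> ?S)"
    by (auto simp: length_Suc_conv)
  have inj: "inj_on (\<lambda>(y, ys). y#ys) (UNIV \<times> ?S)" by (auto simp: inj_on_def)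
  have fin: "finite ?S" using finite_lists_length_eq[of "UNIV::'y set" "length xs"] by simp
  have "(\<Sum>ys\<in>{ys. length ys = length (x#xs)}. \<Prod>i<length (x#xs). f ((x#xs)!i) (ys!i))
      = (\<Sum>(y,ys)\<in>UNIV \<times> ?S. f x y * (\<Prod>i<length xs. f (xs!i) (ys!i)))"
    unfolding eq by (subst sum.reindex[OF inj]) (auto simp del: prod.lessThan_Suc simp add: prod.lessThan_Suc_shift intro!: sum.cong)
  also have "\<dots> = (\<Sum>y\<in>UNIV. \<Sum>ys\<in>?S. f x y * (\<Prod>i<length xs. f (xs!i) (ys!i)))"
    by (simp only: sum.cartesian_product)
  also have "\<dots> = (\<Sum>y\<in>UNIV. f x y) * (\<Sum>ys\<in>?S. \<Prod>i<length xs. f (xs!i) (ys!i))"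
    by (rule sum_product[symmetric])
  also have "\<dots> = (\<Prod>i<length (x#xs). \<Sum>y\<in>UNIV. f ((x#xs)!i) y)"
    using Cons by (simp del: prod.lessThan_Suc add: prod.lessThan_Suc_shift)
  finally show ?case .
qed

lemma qlnsq_bound:
  fixes q :: "'y::finite \<Rightarrow> real"
  assumes nn: "\<And>y. q y \<ge> 0" and s1: "sum q UNIV = 1"
  shows "(\<Sum>y\<in>UNIV. q y * (ln (q y))\<^sup>2) \<le> 18 * Kfun (real CARD('y)) * ln 2"
proof -
  define D where "D = max (real CARD('y)) 3"
  have D3: "D \<ge> 3" and dD: "real CARD('y) \<le> D" by (auto simp: D_def)
  have lnD: "ln D \<ge> 1"
  proof -
    have "exp 1 \<le> D" using exp_le D3 by linarith
    hence "ln (exp 1) \<le> ln D" using D3 by (subst ln_le_cancel_iff) auto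
    thus ?thesis by simp
  qed
  have q1: "q y \<le> 1" for y
    using member_le_sum[of y UNIV q] nn s1 by auto
  have pw: "q y * (ln (q y))\<^sup>2 \<le> 4 * (ln D)\<^sup>2 * q y + 16 / D" for y
  proof -
    consider "q y = 0" | "q y \<ge> 1 / D\<^sup>2" | "0 < q y" "q y < 1 / D\<^sup>2"
      using nn[of y] by fastforce
    then show ?thesis
    proof cases
      case 1 then show ?thesis using D3 by simp
    next
      case 2
      have "1 / D\<^sup>2 > 0" using D3 by simp
      hence pos: "q y > 0" using 2 by linarith
      have "ln (1 / D\<^sup>2) \<le> ln (q y)" using 2 pos D3 by (subst ln_le_cancel_iff) auto
      moreover have "ln (1 / D\<^sup>2) = - 2 * ln D" using D3 by (simp add: ln_div ln_realpow)
      moreover have "ln (q y) \<le> 0" using q1[of y] pos by simp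
      ultimately have "(- ln (q y))\<^sup>2 \<le> (2 * ln D)\<^sup>2"
        by (intro power_mono) auto
      hence "(ln (q y))\<^sup>2 \<le> 4 * (ln D)\<^sup>2" by (simp add: power_mult_distrib)
      hence "q y * (ln (q y))\<^sup>2 \<le> q y * (4 * (ln D)\<^sup>2)" using pos by (intro mult_left_mono) auto
      moreover have "0 \<le> 16 / D" using D3 by simp
      moreover have "4 * (ln D)\<^sup>2 * q y = q y * (4 * (ln D)\<^sup>2)" by simp
      ultimately show ?thesis by linarith
    next
      case 3
      define x where "x = q y"
      have x0: "x > 0" and xD: "x < 1 / D\<^sup>2" using 3 by (auto simp: x_def)
      define r where "r = sqrt (sqrt (1 / x))"
      have r0: "r > 0" using x0 by (simp add: r_def)
      have rr: "r * r = sqrt (1 / x)" using x0 unfolding r_def by simp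
      have "r ^ 4 = (r * r) * (r * r)" by (simp add: power4_eq_xxxx mult.assoc)
      also have "\<dots> = 1 / x" using x0 by (simp only: rr) simp
      finally have r4: "r ^ 4 = 1 / x" .
      have "ln (1 / x) = 4 * ln r" using r0 by (simp flip: r4 add: ln_realpow)
      moreover have "ln r \<le> r" using ln_le_minus_one[OF r0] by linarith
      moreover have "ln (1/x) \<ge> 0" using x0 q1[of y] by (simp add: ln_div x_def)
      ultimately have "(ln (1/x))\<^sup>2 \<le> (4 * r)\<^sup>2" by (intro power_mono) auto
      also have "(4 * r)\<^sup>2 = 16 * sqrt (1 / x)" using x0 by (simp add: r_def power_mult_distrib)
      finally have l: "(ln x)\<^sup>2 \<le> 16 * sqrt (1 / x)" using x0 by (simp add: ln_div)
      have "x * (ln x)\<^sup>2 \<le> x * (16 * sqrt (1 / x))" using l x0 by (intro mult_left_mono) auto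
      also have "x * (16 * sqrt (1 / x)) = 16 * sqrt x" using x0
        by (simp add: real_sqrt_divide field_simps)
      also have "sqrt x \<le> sqrt (1 / D\<^sup>2)" using xD by (intro real_sqrt_le_mono) auto
      also have "sqrt (1 / D\<^sup>2) = 1 / D" using D3 by (simp add: real_sqrt_divide)
      finally have "x * (ln x)\<^sup>2 \<le> 16 / D" by simp
      moreover have "0 \<le> 4 * (ln D)\<^sup>2 * q y" using nn[of y] by simp
      ultimately show ?thesis unfolding x_def by linarith
    qed
  qed
  have "(\<Sum>y\<in>UNIV. q y * (ln (q y))\<^sup>2) \<le> (\<Sum>y\<in>UNIV. 4 * (ln D)\<^sup>2 * q y + 16 / D)"
    by (intro sum_mono pw)
  also have "\<dots> = 4 * (ln D)\<^sup>2 + 16 * real CARD('y) / D"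
    by (simp add: sum.distrib flip: sum_distrib_left add: s1)
  also have "16 * real CARD('y) / D \<le> 16" using dD D3 by (simp add: divide_le_eq)
  also have "4 * (ln D)\<^sup>2 + 16 \<le> 20 * (ln D)\<^sup>2"
    using one_le_power[OF lnD, of 2] by linarith
  also have "20 * (ln D)\<^sup>2 \<le> 18 * (ln D)\<^sup>2 / ln 2"
  proof -
    have "20 * (ln D)\<^sup>2 * ln 2 \<le> 20 * (ln D)\<^sup>2 * (9/10)" using ln2_le by (intro mult_left_mono) auto
    thus ?thesis by (simp add: le_divide_eq)
  qed
  also have "18 * (ln D)\<^sup>2 / ln 2 = 18 * Kfun (real CARD('y)) * ln 2"
    unfolding Kfun_def D_def[symmetric] log_def by (simp add: power2_eq_square)
  finally show ?thesis by simp
qed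

lemma letter_bound:
  fixes q :: "'y::finite \<Rightarrow> real"
  assumes nn: "\<And>y. q y \<ge> 0" and s1: "sum q UNIV = 1" and l0: "l \<ge> 0"
  shows "(\<Sum>y\<in>UNIV. q y powr (1 + l))
     \<le> exp (- l * (ln 2 * entropy2 q) + l\<^sup>2 * (18 * Kfun (real CARD('y)) * ln 2) / 2)"
proof -
  have q1: "q y \<le> 1" for y
    using member_le_sum[of y UNIV q] nn s1 by auto
  have pw: "q y powr (1 + l) \<le> q y + l * (q y * ln (q y)) + l\<^sup>2 / 2 * (q y * (ln (q y))\<^sup>2)" for y
  proof (cases "q y = 0")
    case True then show ?thesis by simp
  next
    case False
    hence pos: "q y > 0" using nn[of y] by simp
    have "l * ln (q y) \<le> 0" using l0 q1[of y] pos by (simp add: mult_nonneg_nonpos)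
    hence e: "exp (l * ln (q y)) \<le> 1 + l * ln (q y) + (l * ln (q y))\<^sup>2 / 2" by (rule exp_upper_neg)
    have "q y powr (1 + l) = q y * exp (l * ln (q y))"
      using pos by (simp add: powr_def distrib_right exp_add)
    also have "\<dots> \<le> q y * (1 + l * ln (q y) + (l * ln (q y))\<^sup>2 / 2)"
      using e pos by (intro mult_left_mono) auto
    finally show ?thesis by (simp add: algebra_simps power_mult_distrib)
  qed
  have "(\<Sum>y\<in>UNIV. q y powr (1 + l)) \<le> (\<Sum>y\<in>UNIV. q y + l * (q y * ln (q y)) + l\<^sup>2 / 2 * (q y * (ln (q y))\<^sup>2))"
    by (intro sum_mono pw)
  also have "\<dots> = 1 + l * (\<Sum>y\<in>UNIV. q y * ln (q y)) + l\<^sup>2 / 2 * (\<Sum>y\<in>UNIV. q y * (ln (q y))\<^sup>2)"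
    by (simp add: sum.distrib s1 sum_distrib_left)
  also have "(\<Sum>y\<in>UNIV. q y * ln (q y)) = - (ln 2 * entropy2 q)"
    unfolding entropy2_def log_def by (simp add: sum_distrib_left field_simps)
  also have "l\<^sup>2 / 2 * (\<Sum>y\<in>UNIV. q y * (ln (q y))\<^sup>2) \<le> l\<^sup>2 / 2 * (18 * Kfun (real CARD('y)) * ln 2)"
    by (intro mult_left_mono qlnsq_bound nn s1) auto
  also have "1 + l * - (ln 2 * entropy2 q) + l\<^sup>2 / 2 * (18 * Kfun (real CARD('y)) * ln 2)
     \<le> exp (- l * (ln 2 * entropy2 q) + l\<^sup>2 * (18 * Kfun (real CARD('y)) * ln 2) / 2)"
  proof -
    have "1 + l * - (ln 2 * entropy2 q) + l\<^sup>2 / 2 * (18 * Kfun (real CARD('y)) * ln 2)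
       = 1 + (- l * (ln 2 * entropy2 q) + l\<^sup>2 * (18 * Kfun (real CARD('y)) * ln 2) / 2)" by simp
    thus ?thesis
      using exp_ge_add_one_self[of "- l * (ln 2 * entropy2 q) + l\<^sup>2 * (18 * Kfun (real CARD('y)) * ln 2) / 2"]
      by linarith
  qed
  finally show ?thesis by simp
qed

theorem lemma2:
  fixes X :: "'x measure" and W :: "'x \<Rightarrow> 'y::finite \<Rightarrow> real"
    and n :: nat and \<delta> \<epsilon> :: real and xs xs' :: "'x list"
  assumes "channel X W"
    and "0 < \<delta>" and "\<delta> \<le> sqrt (real n) * log 2 (real CARD('y))"
    and "length xs = n" and "length xs' = n"
    and "set xs \<subseteq> space X" and "set xs' \<subseteq> space X"
    and "1 - l1_dist_prod W xs xs' / 2 \<le> \<epsilon>"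
  shows "(\<Sum>ys\<in>typical_set W \<delta> xs. prod_chan W xs' ys)
    \<le> 2 * 2 powr (- \<delta>\<^sup>2 / (36 * Kfun (real CARD('y))))
      + \<epsilon> * (1 + 2 powr (2 * \<delta> * sqrt (real n)) * 2 powr (entropy_prod W xs - entropy_prod W xs'))"
proof -
  note ch = assms(1)[unfolded channel_def]
  have Wnn: "W x y \<ge> 0" if "x \<in> space X" for x y using ch that by blast
  have Ws1: "(\<Sum>y\<in>UNIV. W x y) = 1" if "x \<in> space X" for x using ch that by blast
  have n0: "n > 0"
  proof (rule ccontr)
    assume "\<not> n > 0" hence "n = 0" by simp
    thus False using assms(2,3) by simp
  qed
  define S where "S = {ys::'y list. length ys = n}"
  have finS: "finite S" unfolding S_def using finite_lists_length_eq[of "UNIV::'y set" n] by simp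
  define P where "P = prod_chan W xs"
  define Q where "Q = prod_chan W xs'"
  have xsX: "xs ! i \<in> space X" if "i < n" for i using assms(4,6) that nth_mem by blast
  have xs'X: "xs' ! i \<in> space X" if "i < n" for i using assms(5,7) that nth_mem by blast
  have Pnn: "P ys \<ge> 0" for ys unfolding P_def prod_chan_def using assms(4) xsX Wnn
    by (auto intro!: prod_nonneg)
  have Qnn: "Q ys \<ge> 0" for ys unfolding Q_def prod_chan_def using assms(5) xs'X Wnn
    by (auto intro!: prod_nonneg)
  have PS1: "sum P S = 1"
    unfolding P_def prod_chan_def S_def using sum_lists_prod[of W xs] assms(4) xsX Ws1 by simp
  have QS1: "sum Q S = 1"
    unfolding Q_def prod_chan_def S_def using sum_lists_prod[of W xs'] assms(5) xs'X Ws1 by simp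
  have l1: "l1_dist_prod W xs xs' = (\<Sum>ys\<in>S. \<bar>P ys - Q ys\<bar>)"
    unfolding l1_dist_prod_def S_def P_def Q_def using assms(4) by simp
  have minS: "(\<Sum>ys\<in>S. min (P ys) (Q ys)) \<le> \<epsilon>"
  proof -
    have "(\<Sum>ys\<in>S. min (P ys) (Q ys)) = (\<Sum>ys\<in>S. (P ys + Q ys - \<bar>P ys - Q ys\<bar>) / 2)"
      by (intro sum.cong) auto
    also have "\<dots> = (sum P S + sum Q S - (\<Sum>ys\<in>S. \<bar>P ys - Q ys\<bar>)) / 2"
      by (simp only: sum_divide_distrib[symmetric] sum_subtractf sum.distrib)
    also have "\<dots> = 1 - l1_dist_prod W xs xs' / 2" using PS1 QS1 l1 by simp
    finally show ?thesis using assms(8) by simp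
  qed
  define t where "t = \<delta> * sqrt (real n)"
  define HP where "HP = entropy_prod W xs"
  define HQ where "HQ = entropy_prod W xs'"
  define c where "c = 2 powr (2 * \<delta> * sqrt (real n)) * 2 powr (HP - HQ)"
  define \<theta> where "\<theta> = 2 powr (t - HQ)"
  have c0: "c \<ge> 0" unfolding c_def by simp
  have \<theta>0: "\<theta> > 0" unfolding \<theta>_def by simp
  define T where "T = typical_set W \<delta> xs"
  have TS: "T \<subseteq> S" unfolding T_def typical_set_def S_def using assms(4) by auto
  have pw: "Q ys \<le> (1 + c) * min (P ys) (Q ys) + (if Q ys > \<theta> then Q ys else 0)" if "ys \<in> T" for ys
  proof (cases "Q ys > \<theta>")
    case True then show ?thesis using c0 Pnn[of ys] Qnn[of ys] by simp
  next
    case False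
    show ?thesis
    proof (cases "Q ys \<le> P ys")
      case True then show ?thesis using c0 Qnn[of ys] False by (simp add: algebra_simps)
    next
      case QP: False
      have Ppos: "P ys > 0" and typP: "\<bar>log 2 (P ys) + HP\<bar> \<le> t"
        using that assms(4) unfolding T_def typical_set_def P_def HP_def t_def by auto
      have "- HP - t \<le> log 2 (P ys)" using typP by linarith
      hence "2 powr (- HP - t) \<le> 2 powr (log 2 (P ys))" by simp
      hence Plow: "2 powr (- HP - t) \<le> P ys" using Ppos by simp
      have "Q ys \<le> \<theta>" using False by simp
      also have "\<theta> = c * 2 powr (- HP - t)"
        unfolding \<theta>_def c_def t_def by (simp flip: powr_add add: algebra_simps)
      also have "\<dots> \<le> c * P ys" using Plow c0 by (intro mult_left_mono)
      also have "\<dots> \<le> (1 + c) * min (P ys) (Q ys)" using QP Pnn[of ys] by (simp add: algebra_simps)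
      finally show ?thesis using False by simp
    qed
  qed
  define K where "K = Kfun (real CARD('y))"
  define Mb where "Mb = 18 * K * ln 2"
  have K0: "K > 0"
  proof -
    have "max (real CARD('y)) 3 > 1" by simp
    hence "log 2 (max (real CARD('y)) 3) > 0" by simp
    thus ?thesis unfolding K_def Kfun_def by (metis less_irrefl zero_less_power2)
  qed
  have Mb0: "Mb > 0" unfolding Mb_def using K0 by simp
  define l where "l = ln 2 * t / (real n * Mb)"
  have l0: "l \<ge> 0" unfolding l_def t_def using assms(2) Mb0 by simp
  have chern: "(\<Sum>ys\<in>S. if Q ys > \<theta> then Q ys else 0) \<le> exp (- ln 2 * \<delta>\<^sup>2 / (36 * K))"
  proof -
    have "(\<Sum>ys\<in>S. if Q ys > \<theta> then Q ys else 0) \<le> (\<Sum>ys\<in>S. Q ys powr (1 + l) * \<theta> powr (- l))"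
    proof (intro sum_mono)
      fix ys assume "ys \<in> S"
      show "(if Q ys > \<theta> then Q ys else 0) \<le> Q ys powr (1 + l) * \<theta> powr (- l)"
      proof (cases "Q ys > \<theta>")
        case True
        hence Qp: "Q ys > 0" using \<theta>0 by simp
        have "\<theta> powr l \<le> Q ys powr l" using True \<theta>0 l0 by (intro powr_mono2) auto
        hence "Q ys * 1 \<le> Q ys * (Q ys powr l * \<theta> powr (- l))"
          using Qp \<theta>0 by (intro mult_left_mono) (auto simp: powr_minus field_simps)
        also have "\<dots> = Q ys powr (1 + l) * \<theta> powr (- l)" using Qp by (simp add: powr_add)
        finally show ?thesis using True by simp
      qed simp
    qed
    also have "\<dots> = \<theta> powr (- l) * (\<Sum>ys\<in>S. Q ys powr (1 + l))"
      by (simp add: sum_distrib_left mult.commute)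
    finally have A: "(\<Sum>ys\<in>S. if Q ys > \<theta> then Q ys else 0) \<le> \<theta> powr (- l) * (\<Sum>ys\<in>S. Q ys powr (1 + l))" .
    have "(\<Sum>ys\<in>S. Q ys powr (1 + l)) = (\<Prod>i<n. \<Sum>y\<in>UNIV. W (xs' ! i) y powr (1 + l))"
      unfolding S_def Q_def prod_chan_def prod_powr_distrib
      using sum_lists_prod[of "\<lambda>x y. W x y powr (1 + l)" xs'] assms(5) by simp
    also have "\<dots> \<le> (\<Prod>i<n. exp (- l * (ln 2 * entropy2 (W (xs' ! i))) + l\<^sup>2 * Mb / 2))"
      unfolding Mb_def K_def
      by (intro prod_mono conjI sum_nonneg letter_bound Wnn Ws1 xs'X l0) auto
    also have "\<dots> = exp (\<Sum>i<n. - l * (ln 2 * entropy2 (W (xs' ! i))) + l\<^sup>2 * Mb / 2)"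
      by (simp add: exp_sum)
    also have "(\<Sum>i<n. - l * (ln 2 * entropy2 (W (xs' ! i))) + l\<^sup>2 * Mb / 2) = - l * ln 2 * HQ + real n * l\<^sup>2 * Mb / 2"
    proof -
      have "(\<Sum>i<n. - l * (ln 2 * entropy2 (W (xs' ! i))) + l\<^sup>2 * Mb / 2)
         = (\<Sum>i<n. (- l * ln 2) * entropy2 (W (xs' ! i))) + real n * (l\<^sup>2 * Mb / 2)"
        by (simp only: sum.distrib sum_constant mult.assoc) simp
      also have "(\<Sum>i<n. (- l * ln 2) * entropy2 (W (xs' ! i))) = (- l * ln 2) * HQ"
        unfolding HQ_def entropy_prod_def using assms(5) by (simp only: sum_distrib_left)
      finally show ?thesis by simp
    qed
    finally have B: "(\<Sum>ys\<in>S. Q ys powr (1 + l)) \<le> exp (- l * ln 2 * HQ + real n * l\<^sup>2 * Mb / 2)" .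
    have C: "\<theta> powr (- l) = exp (- l * ln 2 * (t - HQ))"
      unfolding \<theta>_def powr_powr by (simp add: powr_def algebra_simps)
    have D1: "- l * ln 2 * (t - HQ) + (- l * ln 2 * HQ + real n * l\<^sup>2 * Mb / 2)
        = - l * ln 2 * t + real n * l\<^sup>2 * Mb / 2" by (simp add: algebra_simps)
    have D2: "- l * ln 2 * t + real n * l\<^sup>2 * Mb / 2 = - ((ln 2 * t)\<^sup>2 / (2 * real n * Mb))"
      unfolding l_def using n0 Mb0 by (simp add: field_simps power2_eq_square)
    have D3: "(ln 2 * t)\<^sup>2 / (2 * real n * Mb) = ln 2 * \<delta>\<^sup>2 / (36 * K)"
    proof -
      have tt: "t\<^sup>2 = \<delta>\<^sup>2 * real n" unfolding t_def by (simp add: power_mult_distrib)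
      have "(ln 2 * t)\<^sup>2 = (ln 2 * ln 2) * (\<delta>\<^sup>2 * real n)"
        by (simp only: power_mult_distrib tt power2_eq_square[of "ln 2"])
      note h = this
      have l: "ln (2::real) > 0" by simp
      have "(ln 2 * t)\<^sup>2 / (2 * real n * Mb) = (ln 2 * ln 2) * (\<delta>\<^sup>2 * real n) / (2 * real n * (18 * K * ln 2))"
        by (simp only: h Mb_def)
      also have "\<dots> = ln 2 * \<delta>\<^sup>2 / (36 * K)" using n0 K0 l by (simp add: field_simps)
      finally show ?thesis .
    qed
    have "\<theta> powr (- l) * (\<Sum>ys\<in>S. Q ys powr (1 + l)) \<le> \<theta> powr (- l) * exp (- l * ln 2 * HQ + real n * l\<^sup>2 * Mb / 2)"
      using B by (intro mult_left_mono) auto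
    also have "\<dots> = exp (- l * ln 2 * (t - HQ) + (- l * ln 2 * HQ + real n * l\<^sup>2 * Mb / 2))"
      unfolding C exp_add ..
    also have "\<dots> = exp (- ln 2 * \<delta>\<^sup>2 / (36 * K))" unfolding D1 D2 D3 by simp
    finally show ?thesis using A by linarith
  qed
  have "(\<Sum>ys\<in>T. Q ys) \<le> (\<Sum>ys\<in>T. (1 + c) * min (P ys) (Q ys) + (if Q ys > \<theta> then Q ys else 0))"
    by (intro sum_mono pw)
  also have "\<dots> \<le> (\<Sum>ys\<in>S. (1 + c) * min (P ys) (Q ys) + (if Q ys > \<theta> then Q ys else 0))"
    using TS finS c0 Pnn Qnn by (intro sum_mono2) auto
  also have "\<dots> = (1 + c) * (\<Sum>ys\<in>S. min (P ys) (Q ys)) + (\<Sum>ys\<in>S. if Q ys > \<theta> then Q ys else 0)"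
    by (simp add: sum.distrib sum_distrib_left)
  also have "\<dots> \<le> (1 + c) * \<epsilon> + exp (- ln 2 * \<delta>\<^sup>2 / (36 * K))"
    using minS chern c0 by (intro add_mono mult_left_mono) auto
  also have "exp (- ln 2 * \<delta>\<^sup>2 / (36 * K)) = 2 powr (- \<delta>\<^sup>2 / (36 * K))"
    by (simp add: powr_def)
  finally have "(\<Sum>ys\<in>T. Q ys) \<le> (1 + c) * \<epsilon> + 2 powr (- \<delta>\<^sup>2 / (36 * K))" .
  moreover have "2 powr (- \<delta>\<^sup>2 / (36 * K)) \<ge> 0" by simp
  moreover have "(1 + c) * \<epsilon> = \<epsilon> * (1 + c)" by simp
  ultimately have "(\<Sum>ys\<in>T. Q ys) \<le> 2 * 2 powr (- \<delta>\<^sup>2 / (36 * K)) + \<epsilon> * (1 + c)" by linarith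
  thus ?thesis unfolding T_def Q_def K_def c_def HP_def HQ_def .
qed

end
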